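(* Let $0\le\alpha<1$, let $n$ and $k$ be integers with $2\le k\le n-3$, and let $G=\overline{P_k\cup C_{n-k}}$. Then (a) if $k$ is even, $\lambda_1(A_\alpha(\overline{P_n}))>\lambda_1(A_\alpha(G))$; (b) if $k$ is odd, $\lambda_1(A_\alpha(\overline{P_n}))<\lambda_1(A_\alpha(G))$.
   Context: All graphs are finite, simple and undirected. For a graph $G$, $A(G)$ is its adjacency matrix, $D(G)$ its diagonal degree matrix, and $A_\alpha(G)=\alpha D(G)+(1-\alpha)A(G)$. $\lambda_1(M)$ denotes the largest eigenvalue of a real symmetric matrix $M$. $P_k$ is the path and $C_k$ the cycle on $k$ vertices, $\cup$ is disjoint union and $\overline{G}$ the complement of $G$. *)

theory Defs
  imports Main "Jordan_Normal_Form.Char_Poly"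
begin

text \<open>A simple graph on vertex set {0..<n} is given by a symmetric irreflexive
  adjacency predicate E (only its restriction to {0..<n} matters).\<close>

definition path_graph :: "nat \<Rightarrow> nat \<Rightarrow> bool" where
  "path_graph i j \<longleftrightarrow> i + 1 = j \<or> j + 1 = i"

definition cycle_graph :: "nat \<Rightarrow> nat \<Rightarrow> nat \<Rightarrow> bool" where
  "cycle_graph m i j \<longleftrightarrow> i < m \<and> j < m \<and> i \<noteq> j \<and> ((i + 1) mod m = j \<or> (j + 1) mod m = i)"

definition path_cycle_union :: "nat \<Rightarrow> nat \<Rightarrow> nat \<Rightarrow> nat \<Rightarrow> bool" where
  "path_cycle_union k n i j \<longleftrightarrow>
     (i < k \<and> j < k \<and> path_graph i j) \<or>
     (k \<le> i \<and> k \<le> j \<and> i < n \<and> j < n \<and> cycle_graph (n - k) (i - k) (j - k))"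

definition complement_graph :: "(nat \<Rightarrow> nat \<Rightarrow> bool) \<Rightarrow> nat \<Rightarrow> nat \<Rightarrow> bool" where
  "complement_graph E i j \<longleftrightarrow> i \<noteq> j \<and> \<not> E i j"

definition adj_mat :: "nat \<Rightarrow> (nat \<Rightarrow> nat \<Rightarrow> bool) \<Rightarrow> real mat" where
  "adj_mat n E = mat n n (\<lambda>(i, j). if E i j then 1 else 0)"

definition deg_mat :: "nat \<Rightarrow> (nat \<Rightarrow> nat \<Rightarrow> bool) \<Rightarrow> real mat" where
  "deg_mat n E = mat n n (\<lambda>(i, j). if i = j then real (card {l. l < n \<and> E i l}) else 0)"

definition A_alpha :: "real \<Rightarrow> nat \<Rightarrow> (nat \<Rightarrow> nat \<Rightarrow> bool) \<Rightarrow> real mat" where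
  "A_alpha \<alpha> n E = \<alpha> \<cdot>\<^sub>m deg_mat n E + (1 - \<alpha>) \<cdot>\<^sub>m adj_mat n E"

definition lambda1 :: "real mat \<Rightarrow> real" where
  "lambda1 M = Max {x. eigenvalue M x}"

end

theory Submission
  imports Defs "Jordan_Normal_Form.Spectral_Radius"
begin

lemma finite_eig:
  assumes "(M::real mat) \<in> carrier_mat n n"
  shows "finite {x. eigenvalue M x}"
  using card_finite_spectrum[OF assms] unfolding spectrum_def by simp

lemma eig_bound:
  fixes M :: "real mat"
  assumes M: "M \<in> carrier_mat n n"
    and nonneg: "\<And>i j. i<n \<Longrightarrow> j<n \<Longrightarrow> M$$(i,j) \<ge> 0"
    and sym: "\<And>i j. i<n \<Longrightarrow> j<n \<Longrightarrow> M$$(i,j) = M$$(j,i)"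
    and z: "\<And>i. i<n \<Longrightarrow> z i > 0"
    and lt: "\<And>i. i<n \<Longrightarrow> (\<Sum>j<n. M$$(i,j) * z j) < lam * z i"
    and ev: "eigenvalue M mu"
  shows "mu < lam"
proof -
  obtain v where v: "v \<in> carrier_vec n" "v \<noteq> 0\<^sub>v n" "M *\<^sub>v v = mu \<cdot>\<^sub>v v"
    using ev M unfolding eigenvalue_def eigenvector_def by auto
  have dv: "dim_vec v = n" using v(1) by simp
  have row: "mu * v$i = (\<Sum>j<n. M$$(i,j) * v$j)" if "i<n" for i
  proof -
    have "(M *\<^sub>v v) $ i = mu * v$i" using v(3) that dv by simp
    moreover have "(M *\<^sub>v v) $ i = (\<Sum>j<n. M$$(i,j) * v$j)"
      using that M dv by (auto simp: scalar_prod_def row_def lessThan_atLeast0)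
    ultimately show ?thesis by simp
  qed
  have absb: "\<bar>mu\<bar> * \<bar>v$i\<bar> \<le> (\<Sum>j<n. M$$(i,j) * \<bar>v$j\<bar>)" if "i<n" for i
  proof -
    have "\<bar>mu\<bar> * \<bar>v$i\<bar> = \<bar>\<Sum>j<n. M$$(i,j) * v$j\<bar>" using row[OF that] by (metis abs_mult)
    also have "\<dots> \<le> (\<Sum>j<n. \<bar>M$$(i,j) * v$j\<bar>)" by (rule sum_abs)
    also have "\<dots> = (\<Sum>j<n. M$$(i,j) * \<bar>v$j\<bar>)"
      by (rule sum.cong) (auto simp: abs_mult nonneg that)
    finally show ?thesis .
  qed
  obtain j0 where j0: "j0 < n" "v$j0 \<noteq> 0"
    using v(1,2) by (metis dv eq_vecI index_zero_vec(1) index_zero_vec(2))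
  define S where "S = (\<Sum>i<n. z i * \<bar>v$i\<bar>)"
  have Spos: "S > 0" unfolding S_def
  proof (rule sum_pos2[of _ j0])
    show "finite {..<n}" by simp
    show "j0 \<in> {..<n}" using j0 by simp
    show "0 < z j0 * \<bar>v $ j0\<bar>" using j0 z by simp
    show "\<And>i. i \<in> {..<n} \<Longrightarrow> 0 \<le> z i * \<bar>v $ i\<bar>" using z by (simp add: less_imp_le)
  qed
  have "\<bar>mu\<bar> * S = (\<Sum>i<n. z i * (\<bar>mu\<bar> * \<bar>v$i\<bar>))"
    unfolding S_def by (simp add: sum_distrib_left algebra_simps)
  also have "\<dots> \<le> (\<Sum>i<n. z i * (\<Sum>j<n. M$$(i,j) * \<bar>v$j\<bar>))"
    by (rule sum_mono) (use absb z in \<open>auto intro: mult_left_mono less_imp_le\<close>)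
  also have "\<dots> = (\<Sum>j<n. \<bar>v$j\<bar> * (\<Sum>i<n. M$$(j,i) * z i))"
  proof -
    have "(\<Sum>i<n. z i * (\<Sum>j<n. M$$(i,j) * \<bar>v$j\<bar>)) = (\<Sum>i<n. \<Sum>j<n. \<bar>v$j\<bar> * (M$$(j,i) * z i))"
      by (rule sum.cong[OF refl], simp add: sum_distrib_left, rule sum.cong[OF refl], simp add: sym)
    also have "\<dots> = (\<Sum>j<n. \<Sum>i<n. \<bar>v$j\<bar> * (M$$(j,i) * z i))" by (rule sum.swap)
    also have "\<dots> = (\<Sum>j<n. \<bar>v$j\<bar> * (\<Sum>i<n. M$$(j,i) * z i))" by (simp add: sum_distrib_left)
    finally show ?thesis .
  qed
  also have "\<dots> < (\<Sum>j<n. \<bar>v$j\<bar> * (lam * z j))"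
  proof (rule sum_strict_mono_ex1)
    show "finite {..<n}" by simp
    show "\<forall>x\<in>{..<n}. \<bar>v $ x\<bar> * (\<Sum>i<n. M $$ (x, i) * z i) \<le> \<bar>v $ x\<bar> * (lam * z x)"
      using lt by (simp add: mult_left_mono less_imp_le)
    show "\<exists>a\<in>{..<n}. \<bar>v $ a\<bar> * (\<Sum>i<n. M $$ (a, i) * z i) < \<bar>v $ a\<bar> * (lam * z a)"
      using lt[OF j0(1)] j0 by (intro bexI[of _ j0]) auto
  qed
  also have "\<dots> = lam * S" unfolding S_def by (simp add: sum_distrib_left algebra_simps)
  finally have "\<bar>mu\<bar> < lam" using Spos by simp
  then show ?thesis by simp
qed

lemma A_alpha_carrier: "A_alpha a n E \<in> carrier_mat n n"
  unfolding A_alpha_def deg_mat_def adj_mat_def by simp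

lemma A_alpha_entry:
  assumes "i < n" "j < n"
  shows "A_alpha a n E $$ (i,j) = a * (if i = j then real (card {l. l < n \<and> E i l}) else 0) + (1 - a) * (if E i j then 1 else 0)"
  using assms unfolding A_alpha_def deg_mat_def adj_mat_def by simp

lemma A_alpha_sum:
  assumes i: "i < n"
  shows "(\<Sum>j<n. A_alpha a n E $$ (i,j) * z j) = a * real (card {l. l < n \<and> E i l}) * z i + (1 - a) * (\<Sum>j\<in>{j. j < n \<and> E i j}. z j)"
proof -
  have "(\<Sum>j<n. A_alpha a n E $$ (i,j) * z j) = (\<Sum>j<n. (if i = j then a * real (card {l. l < n \<and> E i l}) * z j else 0) + (1-a) * (if E i j then z j else 0))"
    by (rule sum.cong) (auto simp: A_alpha_entry i algebra_simps)
  also have "\<dots> = a * real (card {l. l < n \<and> E i l}) * z i + (1 - a) * (\<Sum>j<n. if E i j then z j else 0)"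
    using i by (simp add: sum.distrib sum_distrib_left)
  also have "(\<Sum>j<n. if E i j then z j else 0) = (\<Sum>j\<in>{j. j < n \<and> E i j}. z j)"
    by (simp add: sum.inter_filter[symmetric] lessThan_def Collect_conj_eq Int_commute)
  finally show ?thesis by simp
qed

lemma compl_sum:
  assumes i: "i < n" and irr: "\<not> H i i"
  shows "(\<Sum>j<n. A_alpha a n (complement_graph H) $$ (i,j) * z j)
     = a * real (n - 1 - card {j. j < n \<and> H i j}) * z i + (1 - a) * ((\<Sum>j<n. z j) - z i - (\<Sum>j\<in>{j. j < n \<and> H i j}. z j))"
proof -
  define N where "N = {j. j < n \<and> H i j}"
  have cset: "{j. j < n \<and> complement_graph H i j} = {..<n} - {i} - N"
    unfolding N_def complement_graph_def by auto
  have fN: "finite N" unfolding N_def by simp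
  have Nsub: "N \<subseteq> {..<n} - {i}" unfolding N_def using irr by auto
  have card: "card {j. j < n \<and> complement_graph H i j} = n - 1 - card N"
    unfolding cset using Nsub i by (simp add: card_Diff_subset fN)
  have sm: "(\<Sum>j\<in>{j. j < n \<and> complement_graph H i j}. z j) = (\<Sum>j<n. z j) - z i - (\<Sum>j\<in>N. z j)"
  proof -
    have "(\<Sum>j\<in>{..<n} - {i} - N. z j) = (\<Sum>j\<in>{..<n} - {i}. z j) - (\<Sum>j\<in>N. z j)"
      using Nsub by (simp add: sum_diff fN)
    also have "(\<Sum>j\<in>{..<n} - {i}. z j) = (\<Sum>j<n. z j) - z i" using i by (simp add: sum_diff1)
    finally show ?thesis unfolding cset by simp
  qed
  show ?thesis unfolding A_alpha_sum[OF i] card sm N_def by simp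
qed

definition NN :: "real \<Rightarrow> real \<Rightarrow> nat \<Rightarrow> real" where
  "NN a q p = (1-a) - a*q + (a - (1-a)*q) * (-q)^p"
definition zz :: "real \<Rightarrow> real \<Rightarrow> nat \<Rightarrow> nat \<Rightarrow> real" where
  "zz a q p i = (if i < p then 1 + q / NN a q p * ((-q)^i + (-q)^(p-1-i)) else 1)"
definition rho :: "real \<Rightarrow> real \<Rightarrow> real" where
  "rho a q = (1-a)*(q + 1/q) - 2*a"

lemma gen_lin: "(r+a)*(1+c*X) + (1-a)*(1+c*Y) = r+1+c*((r+a)*X+(1-a)*(Y::real))"
  by (simp add: algebra_simps)

lemma end_identity:
  assumes N: "NN a q (l+2) \<noteq> 0" and q: "q \<noteq> 0"
  shows "(rho a q + a) * (1 + q / NN a q (l+2) * (1 + (-q)^(l+1))) + (1-a) * (1 + q / NN a q (l+2) * ((-q) + (-q)^l)) = rho a q + 2"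
proof -
  define N where "N = NN a q (l+2)"
  define t where "t = (-q)^l"
  have Ndef: "N = (1-a) - a*q + (a - (1-a)*q) * (q*q*t)" unfolding N_def NN_def t_def by (simp add: power_add)
  have p1: "(-q)^(l+1) = - q * t" unfolding t_def by simp
  have key: "(rho a q + a) * (1 + (-q)^(l+1)) + (1-a) * ((-q) + (-q)^l) = N / q"
    unfolding Ndef rho_def p1 t_def[symmetric] using q by (simp add: field_simps)
  have "(rho a q + a) * (1 + q / N * (1 + (-q)^(l+1))) + (1-a) * (1 + q / N * ((-q) + (-q)^l))
     = rho a q + 1 + q / N * ((rho a q + a) * (1 + (-q)^(l+1)) + (1-a) * ((-q) + (-q)^l))"
    using gen_lin[of "rho a q" a "q/N"] by simp
  also have "\<dots> = rho a q + 2" unfolding key using N q unfolding N_def by simp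
  finally show ?thesis unfolding N_def .
qed

lemma mid_identity:
  assumes q: "q \<noteq> 0"
  shows "(rho a q + 2*a) * (1 + A * ((-q)^(j+1) + (-q)^(l+1))) + (1-a) * ((1 + A * ((-q)^j + (-q)^(l+2))) + (1 + A * ((-q)^(j+2) + (-q)^l))) = rho a q + 2"
proof -
  define s where "s = (-q)^j"
  define t where "t = (-q)^l"
  have e: "(-q)^(j+1) = -q*s" "(-q)^(l+1) = -q*t" "(-q)^(j+2) = q*q*s" "(-q)^(l+2) = q*q*t"
    unfolding s_def t_def by (simp_all add: power_add)
  have key: "(rho a q + 2*a) * ((-q)^(j+1) + (-q)^(l+1)) + (1-a) * (((-q)^j + (-q)^(l+2)) + ((-q)^(j+2) + (-q)^l)) = 0"
    unfolding rho_def e s_def[symmetric] t_def[symmetric] using q by (simp add: field_simps)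
  have "(rho a q + 2*a) * (1 + A * ((-q)^(j+1) + (-q)^(l+1))) + (1-a) * ((1 + A * ((-q)^j + (-q)^(l+2))) + (1 + A * ((-q)^(j+2) + (-q)^l)))
    = rho a q + 2 + A * ((rho a q + 2*a) * ((-q)^(j+1) + (-q)^(l+1)) + (1-a) * (((-q)^j + (-q)^(l+2)) + ((-q)^(j+2) + (-q)^l)))"
    by (simp add: algebra_simps)
  then show ?thesis unfolding key by simp
qed

lemma path_nbrs:
  assumes "i < p" "2 \<le> p"
  shows "{j. j<p \<and> path_graph i j} = (if i = 0 then {1} else if i = p-1 then {p-2} else {i-1, i+1})"
  using assms unfolding path_graph_def by auto

lemma path_nbrs':
  assumes "i < p" "2 \<le> p" "p \<le> n"
  shows "{j. j<n \<and> path_graph i j} = {j. j<p \<and> path_graph i j} \<union> (if i = p - 1 \<and> p < n then {p} else {})"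
  using assms unfolding path_graph_def by auto

lemma union_path_nbrs:
  assumes "i < k" "k \<le> n"
  shows "{j. j<n \<and> path_cycle_union k n i j} = {j. j<k \<and> path_graph i j}"
  using assms unfolding path_cycle_union_def by auto

lemma union_cycle_nbrs:
  assumes "k \<le> i" "i < n" "k + 3 \<le> n"
  shows "{j. j<n \<and> path_cycle_union k n i j} = {if i+1 < n then i+1 else k, if k < i then i-1 else n-1}"
proof -
  define m where "m = n - k"
  have m3: "3 \<le> m" using assms unfolding m_def by simp
  obtain i' where i': "i = k + i'" using assms(1) le_Suc_ex by blast
  have i'm: "i' < m" using assms i' unfolding m_def by simp
  have "j \<in> {j. j<n \<and> path_cycle_union k n i j} \<longleftrightarrow> j \<in> {if i+1 < n then i+1 else k, if k < i then i-1 else n-1}" for j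
  proof (cases "k \<le> j \<and> j < n")
    case True
    then obtain j' where j': "j = k + j'" "j' < m" using le_Suc_ex unfolding m_def by force
    have "path_cycle_union k n i j \<longleftrightarrow> cycle_graph m i' j'"
      unfolding path_cycle_union_def m_def using i' j' assms unfolding m_def by auto
    also have "\<dots> \<longleftrightarrow> (j' = (if i'+1 < m then i'+1 else 0) \<or> j' = (if 0 < i' then i'-1 else m-1))"
    proof -
      have a: "(i'+1) mod m = (if i'+1 < m then i'+1 else 0)"
      proof (cases "i'+1 < m")
        case False
        then have "i'+1 = m" using i'm by simp
        then show ?thesis by simp
      qed simp
      have b: "(j'+1) mod m = i' \<longleftrightarrow> j' = (if 0 < i' then i'-1 else m-1)"
      proof (cases "j'+1 < m")
        case False
        then have "j'+1 = m" using j'(2) by simp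
        then show ?thesis using i'm m3 by auto
      qed (use i'm m3 in auto)
      show ?thesis unfolding cycle_graph_def a b using i'm j' m3 by auto
    qed
    finally show ?thesis using i' j' assms unfolding m_def by auto
  next
    case False
    then show ?thesis using assms unfolding path_cycle_union_def by auto
  qed
  then show ?thesis by blast
qed

lemma vertex_path:
  assumes i: "i < p" and p: "2 \<le> p" and N: "NN a q p \<noteq> 0" and q: "q \<noteq> 0"
  shows "(rho a q + a * real (card {j. j<p \<and> path_graph i j})) * zz a q p i
       + (1-a) * (\<Sum>j\<in>{j. j<p \<and> path_graph i j}. zz a q p j) = rho a q + 2"
proof -
  obtain l where l: "p = l + 2" using p le_Suc_ex by (metis add.commute)
  show ?thesis
  proof (cases "i = 0")
    case True
    have "zz a q p 0 = 1 + q / NN a q (l+2) * (1 + (-q)^(l+1))" unfolding zz_def l by simp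
    moreover have "zz a q p 1 = 1 + q / NN a q (l+2) * ((-q) + (-q)^l)" unfolding zz_def l by simp
    ultimately show ?thesis using True path_nbrs[OF i p] end_identity[of a q l] N q l by simp
  next
    case False
    show ?thesis
    proof (cases "i = p - 1")
      case True
      have "zz a q p (p-1) = 1 + q / NN a q (l+2) * (1 + (-q)^(l+1))" unfolding zz_def l by simp
      moreover have "zz a q p (p-2) = 1 + q / NN a q (l+2) * ((-q) + (-q)^l)" unfolding zz_def l by simp
      ultimately show ?thesis using True False path_nbrs[OF i p] end_identity[of a q l] N q l by simp
    next
      case False2: False
      obtain j where j: "i = j + 1" using False by (metis Suc_eq_plus1 not0_implies_Suc)
      define m where "m = p - j - 3"
      have m: "p = j + m + 3" using i False2 j unfolding m_def by simp
      have s: "{j. j<p \<and> path_graph i j} = {i-1, i+1}" using path_nbrs[OF i p] False False2 by simp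
      have c: "card {i-1, i+1} = 2" using j by simp
      have "(\<Sum>j\<in>{i-1,i+1}. zz a q p j) = zz a q p (i-1) + zz a q p (i+1)" using j by simp
      moreover have "zz a q p i = 1 + q / NN a q p * ((-q)^(j+1) + (-q)^(m+1))" unfolding zz_def using m j by simp
      moreover have "zz a q p (i-1) = 1 + q / NN a q p * ((-q)^j + (-q)^(m+2))" unfolding zz_def using m j by simp
      moreover have "zz a q p (i+1) = 1 + q / NN a q p * ((-q)^(j+2) + (-q)^m)" unfolding zz_def using m j by simp
      ultimately show ?thesis unfolding s c using mid_identity[OF q, of a "q / NN a q p" j m] by (simp add: mult.commute[of a])
    qed
  qed
qed

definition lam :: "real \<Rightarrow> nat \<Rightarrow> real \<Rightarrow> real" where
  "lam a n q = rho a q + a * (real n - 1) - (1 - a)"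

lemma Mz_identity:
  assumes i: "i < n" and irr: "\<not> H i i" and q: "q \<noteq> 0"
    and dn: "card {j. j < n \<and> H i j} < n"
    and ve: "(rho a q + a * real (card {j. j < n \<and> H i j})) * z i + (1-a) * (\<Sum>j\<in>{j. j < n \<and> H i j}. z j) = rho a q + 2"
  shows "(\<Sum>j<n. A_alpha a n (complement_graph H) $$ (i,j) * z j) = lam a n q * z i + (1-a) * ((\<Sum>j<n. z j) - (1+q)^2/q)"
proof -
  define d where "d = card {j. j < n \<and> H i j}"
  define sN where "sN = (\<Sum>j\<in>{j. j < n \<and> H i j}. z j)"
  have rd: "real (n - 1 - d) = real n - 1 - real d" using dn unfolding d_def by (simp add: of_nat_diff)
  have r2: "rho a q + 2 = (1-a) * ((1+q)^2/q)" unfolding rho_def using q by (simp add: field_simps power2_eq_square)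
  have ve': "(1-a) * sN = rho a q + 2 - (rho a q + a * real d) * z i" using ve unfolding d_def sN_def by simp
  have "(\<Sum>j<n. A_alpha a n (complement_graph H) $$ (i,j) * z j) = a * (real n - 1 - real d) * z i + (1-a) * ((\<Sum>j<n. z j) - z i - sN)"
    unfolding compl_sum[where H=H and a=a and z=z, OF i irr] d_def[symmetric] sN_def[symmetric] rd ..
  also have "\<dots> = a * (real n - 1 - real d) * z i + (1-a) * ((\<Sum>j<n. z j) - z i) - (1-a) * sN"
    by (simp add: algebra_simps)
  also have "\<dots> = lam a n q * z i + (1-a) * ((\<Sum>j<n. z j) - (1+q)^2/q)"
  proof -
    define T where "T = (1+q)^2/q"
    have r: "rho a q = (1-a)*T - 2" using r2 unfolding T_def by simp
    show ?thesis unfolding ve' lam_def T_def[symmetric] r by (simp add: algebra_simps)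
  qed
  finally show ?thesis .
qed

lemma vertex_P:
  assumes i: "i < n" and n: "2 \<le> n" and N: "NN a q n \<noteq> 0" and q: "q \<noteq> 0"
  shows "(rho a q + a * real (card {j. j<n \<and> path_graph i j})) * zz a q n i
       + (1-a) * (\<Sum>j\<in>{j. j<n \<and> path_graph i j}. zz a q n j) = rho a q + 2"
  by (rule vertex_path[OF i n N q])

lemma vertex_U:
  assumes i: "i < n" and k: "2 \<le> k" "k + 3 \<le> n" and N: "NN a q k \<noteq> 0" and q: "q \<noteq> 0"
  shows "(rho a q + a * real (card {j. j<n \<and> path_cycle_union k n i j})) * zz a q k i
       + (1-a) * (\<Sum>j\<in>{j. j<n \<and> path_cycle_union k n i j}. zz a q k j) = rho a q + 2"
proof (cases "i < k")
  case True
  have kn: "k \<le> n" using k by simp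
  show ?thesis unfolding union_path_nbrs[OF True kn] by (rule vertex_path[OF True k(1) N q])
next
  case False
  define x where "x = (if i+1 < n then i+1 else k)"
  define y where "y = (if k < i then i-1 else n-1)"
  have s: "{j. j<n \<and> path_cycle_union k n i j} = {x, y}"
    unfolding x_def y_def using union_cycle_nbrs[of k i n] False i k by simp
  have xy: "x \<noteq> y" "k \<le> x" "k \<le> y" unfolding x_def y_def using False i k by auto
  have z1: "zz a q k i = 1" "zz a q k x = 1" "zz a q k y = 1" unfolding zz_def using xy False by auto
  show ?thesis unfolding s using xy z1 by (simp add: algebra_simps)
qed

lemma card_P: "i < n \<Longrightarrow> card {j. j<n \<and> path_graph i j} < n"
proof -
  assume i: "i < n"
  have "{j. j<n \<and> path_graph i j} \<subset> {..<n}"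
  proof
    show "{j. j<n \<and> path_graph i j} \<subseteq> {..<n}" by auto
    have "i \<notin> {j. j<n \<and> path_graph i j}" by (simp add: path_graph_def)
    then show "{j. j<n \<and> path_graph i j} \<noteq> {..<n}" using i by auto
  qed
  then show ?thesis by (metis card_lessThan finite_lessThan psubset_card_mono)
qed

lemma card_U: "i < n \<Longrightarrow> card {j. j<n \<and> path_cycle_union k n i j} < n"
proof -
  assume i: "i < n"
  have "{j. j<n \<and> path_cycle_union k n i j} \<subset> {..<n}"
  proof
    show "{j. j<n \<and> path_cycle_union k n i j} \<subseteq> {..<n}" by auto
    have "i \<notin> {j. j<n \<and> path_cycle_union k n i j}" by (simp add: path_cycle_union_def path_graph_def cycle_graph_def)
    then show "{j. j<n \<and> path_cycle_union k n i j} \<noteq> {..<n}" using i by auto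
  qed
  then show ?thesis by (metis card_lessThan finite_lessThan psubset_card_mono)
qed

lemma sum_zz:
  assumes p: "p \<le> n" and q: "q \<noteq> -1"
  shows "(\<Sum>j<n. zz a q p j) = real n + q / NN a q p * (2 * (1 - (-q)^p) / (1 + q))"
proof -
  have q1: "-q \<noteq> 1" using q by auto
  have gp0: "(\<Sum>j<p. (-q)^j) = (1 - (-q)^p) / (1 - (-q))"
    by (simp only: sum_gp_strict if_not_P[OF q1])
  have gp: "(\<Sum>j<p. (-q)^j) = (1 - (-q)^p) / (1 + q)"
    unfolding gp0 by simp
  have rev: "(\<Sum>j<p. (-q)^(p-1-j)) = (\<Sum>j<p. (-q)^j)"
    using sum.nat_diff_reindex[of "\<lambda>j. (-q)^j" p] by simp
  have split: "{..<n} = {..<p} \<union> {p..<n}" using p by auto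
  have s1: "(\<Sum>j<n. zz a q p j) = (\<Sum>j<p. zz a q p j) + (\<Sum>j\<in>{p..<n}. zz a q p j)"
    unfolding split by (rule sum.union_disjoint) auto
  have s2: "(\<Sum>j\<in>{p..<n}. zz a q p j) = real (n - p)"
    unfolding zz_def by simp
  have s3: "(\<Sum>j<p. zz a q p j) = (\<Sum>j<p. 1 + q / NN a q p * ((-q)^j + (-q)^(p-1-j)))"
    unfolding zz_def by simp
  have s4: "(\<Sum>j<p. 1 + q / NN a q p * ((-q)^j + (-q)^(p-1-j))) = real p + q / NN a q p * ((\<Sum>j<p. (-q)^j) + (\<Sum>j<p. (-q)^(p-1-j)))"
    by (simp only: sum.distrib sum_distrib_left[symmetric] sum_constant card_lessThan)
  have s5: "real (n - p) = real n - real p" using p by (simp add: of_nat_diff)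
  show ?thesis unfolding s1 s2 s3 s4 rev gp s5 by (simp add: algebra_simps)
qed

lemma root_exists:
  fixes a :: real and n :: real
  assumes a: "0 \<le> a" "a < 1" and p: "1 \<le> p" and n: "5 \<le> n"
  shows "\<exists>q. 0 < q \<and> q < 1/2 \<and> (1+q)^2 - n*q > 0 \<and>
           NN a q p = 2*q^2*(1 - (-q)^p) / ((1+q)*((1+q)^2 - n*q))"
proof -
  define s where "s = sqrt ((n-2)^2 - 4)"
  have nn: "0 \<le> (n-2)^2 - 4"
  proof -
    have e: "(n-2)^2 - 4 = (n-4)*n" by (simp add: power2_eq_square algebra_simps)
    have "0 \<le> (n-4)*n" using n by (intro mult_nonneg_nonneg) auto
    then show ?thesis unfolding e .
  qed
  have s2: "s^2 = (n-2)^2 - 4" unfolding s_def using real_sqrt_pow2[OF nn] .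
  have s0: "0 \<le> s" unfolding s_def using nn by simp
  have slt: "s < n - 2"
  proof -
    have "s^2 < (n-2)^2" using s2 by simp
    then show ?thesis using s0 n by (smt (verit) power_mono)
  qed
  have sgt: "n - 3 < s"
  proof -
    have "(n-3)^2 < s^2" using s2 n by (simp add: power2_eq_square algebra_simps)
    then show ?thesis using s0 n by (smt (verit) power_mono)
  qed
  define qD where "qD = ((n-2) - s)/2"
  have qD0: "0 < qD" "qD < 1/2" unfolding qD_def using slt sgt by auto
  define D where "D = (\<lambda>q::real. (1+q)^2 - n*q)"
  have DqD: "D qD = 0"
  proof -
    have "4 * D qD = s^2 - ((n-2)^2 - 4)" unfolding D_def qD_def by (simp add: power2_eq_square field_simps)
    then show ?thesis using s2 by simp
  qed
  define P where "P = (\<lambda>q::real. 2*q^2*(1 - (-q)^p) - (1+q) * D q * NN a q p)"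
  have cont: "continuous_on {0..qD} P" unfolding P_def D_def NN_def by (intro continuous_intros)
  have P0: "P 0 = -(1-a)" unfolding P_def D_def NN_def using p by simp
  have ub: "\<bar>(-q)^p\<bar> < 1" if "0 < q" "q < 1" for q :: real
  proof -
    have "\<bar>(-q)^p\<bar> = q^p" using that by (simp add: power_abs)
    also have "\<dots> < 1" using that p by (simp add: power_less_one_iff)
    finally show ?thesis .
  qed
  have PqD: "P qD > 0"
  proof -
    have "\<bar>(-qD)^p\<bar> < 1" using ub qD0 by simp
    then have "0 < 1 - (-qD)^p" by linarith
    then show ?thesis unfolding P_def DqD using qD0 by simp
  qed
  obtain q where q: "0 \<le> q" "q \<le> qD" "P q = 0"
    using IVT'[of P 0 0 qD] cont P0 PqD qD0 a by force
  have qpos: "0 < q" using q P0 a by (cases "q = 0") auto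
  have qlt: "q < qD" using q PqD by (cases "q = qD") auto
  have Dpos: "D q > 0"
  proof -
    have "D q - D qD = (q - qD) * (q + qD + 2 - n)" unfolding D_def by (simp add: power2_eq_square algebra_simps)
    moreover have "(q - qD) * (q + qD + 2 - n) > 0" using qlt qD0 n qpos by (intro mult_neg_neg) auto
    ultimately show ?thesis using DqD by simp
  qed
  have e: "(1+q) * D q * NN a q p = 2*q^2*(1 - (-q)^p)" using q(3) unfolding P_def by simp
  have nz: "(1+q) * D q \<noteq> 0" using Dpos qpos by simp
  have "NN a q p = ((1+q) * D q * NN a q p) / ((1+q)* D q)" using nz by simp
  then have "NN a q p = 2*q^2*(1 - (-q)^p) / ((1+q)* D q)" unfolding e .
  then show ?thesis using qpos qlt qD0 Dpos unfolding D_def by (intro exI[of _ q]) auto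
qed

lemma NN_diff: "NN a q m = NN a q p + (a - (1-a)*q) * ((-q)^m - (-q)^p)"
  unfolding NN_def by (simp add: algebra_simps)

lemma b_bound: fixes a q :: real assumes "0 \<le> a" "a < 1" "0 < q" "q < 1" shows "\<bar>a - (1-a)*q\<bar> \<le> 1"
proof -
  have "0 \<le> (1-a)*q" by (rule mult_nonneg_nonneg) (use assms in auto)
  moreover have "(1-a)*q \<le> 1" by (rule mult_le_one) (use assms in auto)
  ultimately show ?thesis using assms by linarith
qed

lemma abs_negpow: "0 \<le> q \<Longrightarrow> \<bar>(-q)^e\<bar> = (q::real)^e"
  by (simp add: power_abs)

lemma pow_le: "0 \<le> (q::real) \<Longrightarrow> q \<le> 1 \<Longrightarrow> d \<le> e \<Longrightarrow> q^e \<le> q^d"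
  by (rule power_decreasing)

lemma prod_le1:
  fixes q n :: real
  assumes "0 < q" "q < 1/2" "5 \<le> n"
  shows "(1+q)*((1+q)^2 - n*q) \<le> 1"
proof -
  have "(1+q)^2 - n*q \<le> (1+q)^2 - 5*q" using assms by simp
  then have "(1+q)*((1+q)^2 - n*q) \<le> (1+q)*((1+q)^2 - 5*q)" using assms by (intro mult_left_mono) auto
  also have "\<dots> = 1 - 2*q - 2*q^2 + q^3" by (simp add: power2_eq_square power3_eq_cube algebra_simps)
  also have "\<dots> \<le> 1"
  proof -
    have "q^3 \<le> q^2" using assms by (intro power_decreasing) auto
    moreover have "0 \<le> q^2" by simp
    ultimately show ?thesis using assms by linarith
  qed
  finally show ?thesis .
qed

lemma root_lower:
  fixes q n X :: real
  assumes "0 < q" "q < 1/2" "5 \<le> n" "(1+q)^2 - n*q > 0" "X \<ge> 0"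
  shows "X / ((1+q)*((1+q)^2 - n*q)) \<ge> X"
proof -
  define Y where "Y = (1+q)*((1+q)^2 - n*q)"
  have Y: "0 < Y" "Y \<le> 1" unfolding Y_def using assms prod_le1[of q n] by auto
  have "X * Y \<le> X" using Y assms(5) by (simp add: mult_left_le)
  then show ?thesis using Y unfolding Y_def[symmetric] by (simp add: le_divide_eq)
qed

lemma sum_compare:
  fixes q :: real
  assumes q: "0 < q" "q < 1" and Np: "NN a q p > 0" and Nm: "NN a q m > 0"
    and up: "(-q)^p < (-q)^m"
  shows "q / NN a q m * (2 * (1 - (-q)^m) / (1+q)) < q / NN a q p * (2 * (1 - (-q)^p) / (1+q))"
proof -
  define um up' where "um = (-q)^m" and "up' = (-q)^p"
  have id: "(1 - up') * NN a q m - (1 - um) * NN a q p = (1 - q) * (um - up')"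
    unfolding NN_def um_def up'_def by (simp add: algebra_simps)
  have "(1 - um) * NN a q p < (1 - up') * NN a q m"
    using id up q unfolding um_def[symmetric] up'_def[symmetric] by (smt (verit) mult_pos_pos)
  then have "(1 - um) / NN a q m < (1 - up') / NN a q p"
    using Np Nm by (simp add: divide_less_eq less_divide_eq mult.commute)
  then have "q * (2/(1+q)) * ((1 - um) / NN a q m) < q * (2/(1+q)) * ((1 - up') / NN a q p)"
    using q by (intro mult_strict_left_mono) auto
  then show ?thesis unfolding um_def up'_def by (simp add: field_simps)
qed

lemma zz_pos:
  fixes q :: real
  assumes q: "0 < q" "q < 1" and N: "NN a q m > 0"
    and m: "m = 2 \<or> (4 \<le> m \<and> NN a q m > q^2 * (1+q))"
  shows "zz a q m i > 0"
proof (cases "i < m")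
  case False then show ?thesis unfolding zz_def by simp
next
  case True
  define w where "w = (-q)^i + (-q)^(m-1-i)"
  have zi: "zz a q m i = 1 + q / NN a q m * w" unfolding zz_def w_def using True by simp
  have lb: "(-q)^e \<ge> - (q^e)" for e
    using abs_negpow[of q e] abs_ge_minus_self[of "(-q)^e"] q by linarith
  show ?thesis
  proof (cases "w \<ge> 0")
    case True
    then have "q / NN a q m * w \<ge> 0" using q N by simp
    then show ?thesis unfolding zi by simp
  next
    case False
    have ge: "1 + (-q)^e \<ge> 0" if "1 \<le> e" for e
    proof -
      have "(-q)^e \<ge> -q" using lb[of e] pow_le[of q 1 e] q that by simp
      then show ?thesis using q by linarith
    qed
    have m2: "2 \<le> m" using m by auto
    have nz: "i \<noteq> 0" "m - 1 - i \<noteq> 0"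
    proof -
      show "i \<noteq> 0"
      proof
        assume "i = 0"
        then have "w = 1 + (-q)^(m-1)" unfolding w_def by simp
        moreover have "1 \<le> m - 1" using m2 by arith
        ultimately show False using False ge[of "m-1"] by simp
      qed
      show "m - 1 - i \<noteq> 0"
      proof
        assume "m - 1 - i = 0"
        then have "w = 1 + (-q)^i" "1 \<le> i" unfolding w_def using m2 True by auto
        then show False using False ge[of i] by simp
      qed
    qed
    have m4: "4 \<le> m" and Nb: "NN a q m > q^2 * (1+q)" using m True nz by auto
    have wl: "w \<ge> -(q + q^2)"
    proof -
      have e1: "q^e \<le> q" if "1 \<le> e" for e using pow_le[of q 1 e] q that by simp
      have e2: "q^e \<le> q^2" if "2 \<le> e" for e using pow_le[of q 2 e] q that by simp
      have "2 \<le> i \<or> 2 \<le> m - 1 - i" using m4 True by arith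
      then have "q^i + q^(m-1-i) \<le> q + q^2"
        using e1 e2 nz by (metis add.commute add_mono less_one not_le)
      then show ?thesis using lb[of i] lb[of "m-1-i"] unfolding w_def by linarith
    qed
    have "q / NN a q m * w \<ge> q / NN a q m * (-(q + q^2))"
      using wl q N by (intro mult_left_mono) auto
    moreover have "q / NN a q m * (q + q^2) < 1"
      using Nb q N by (simp add: divide_less_eq power2_eq_square algebra_simps)
    ultimately show ?thesis unfolding zi by linarith
  qed
qed

lemma even_bounds:
  fixes a q :: real and n k :: nat
  assumes a: "0 \<le> a" "a < 1" and q: "0 < q" "q < 1/2" and k: "even k" "2 \<le> k" "k + 3 \<le> n"
    and D: "(1+q)^2 - real n*q > 0"
    and root: "NN a q n = 2*q^2*(1 - (-q)^n) / ((1+q)*((1+q)^2 - real n*q))"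
  shows "NN a q n > 0" "NN a q k > 0" "k = 2 \<or> (4 \<le> k \<and> NN a q k > q^2 * (1+q))" "(-q)^n < (-q)^k"
proof -
  have n5: "5 \<le> real n" using k by simp
  have q1: "q < 1" "0 \<le> q" "q \<le> 1" using q by auto
  have un: "\<bar>(-q)^n\<bar> \<le> q^5" using abs_negpow[of q n] pow_le[of q 5 n] q1 k by simp
  have q5: "q^5 \<le> q^2 / 8" "q^3 \<le> q^2 / 2" "q^4 \<le> q^2 / 4" "q^7 \<le> q^2 / 32"
  proof -
    have h: "q^(2+j) = q^2 * q^j" for j by (simp only: power_add)
    have pj: "q^j \<le> (1/2)^j" for j using q by (intro power_mono) auto
    have "q^3 \<le> 1/8" using pj[of 3] by (simp add: power_divide)
    moreover have "q^1 \<le> 1/2" using pj[of 1] by (simp add: power_divide)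
    moreover have "q^2 \<le> 1/4" using pj[of 2] by (simp add: power_divide)
    moreover have "q^5 \<le> 1/32" using pj[of 5] by (simp add: power_divide)
    ultimately have "q^3 \<le> 1/8" "q^1 \<le> 1/2" "q^2 \<le> 1/4" "q^5 \<le> 1/32" by auto
    have z: "0 \<le> q^2" by simp
    have e5: "q^5 = q^2 * q^3" "q^3 = q^2 * q^1" "q^4 = q^2 * q^2" "q^7 = q^2 * q^5"
      by (simp_all add: eval_nat_numeral algebra_simps)
    show "q^5 \<le> q^2 / 8" unfolding e5(1) using mult_left_mono[OF \<open>q^3 \<le> 1/8\<close> z] by simp
    show "q^3 \<le> q^2 / 2" unfolding e5(2) using mult_left_mono[OF \<open>q^1 \<le> 1/2\<close> z] by simp
    show "q^4 \<le> q^2 / 4" unfolding e5(3) using mult_left_mono[OF \<open>q^2 \<le> 1/4\<close> z] by simp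
    show "q^7 \<le> q^2 / 32" unfolding e5(4) using mult_left_mono[OF \<open>q^5 \<le> 1/32\<close> z] by simp
  qed
  have q2p: "0 < q^2" using q by simp
  have q2le: "q^2 < 1" using q by (simp add: power_less_one_iff)
  have u1: "0 < 1 - (-q)^n" using un q5(1) abs_ge_self[of "(-q)^n"] q2le by linarith
  have Nn: "NN a q n \<ge> 2*q^2*(1 - (-q)^n)"
    unfolding root using root_lower[OF q n5 D] u1 by simp
  have Nn': "NN a q n \<ge> 2*q^2 - 2*q^7"
  proof -
    have "(-q)^n \<le> q^5" using un abs_ge_self[of "(-q)^n"] by linarith
    then have "2*q^2*(1 - (-q)^n) \<ge> 2*q^2*(1 - q^5)" by (intro mult_left_mono) auto
    moreover have "2*q^2*(1 - q^5) = 2*q^2 - 2*q^7" by (simp add: algebra_simps power_add[symmetric])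
    ultimately show ?thesis using Nn by linarith
  qed
  show "NN a q n > 0" using Nn' q5 q2p by linarith
  have uk: "(-q)^k = q^k" using k by (simp add: power_minus_even)
  have bb: "\<bar>a - (1-a)*q\<bar> \<le> 1" using b_bound a q1 q by simp
  have dif: "\<bar>(a - (1-a)*q) * ((-q)^k - (-q)^n)\<bar> \<le> q^k + q^5"
  proof -
    have "\<bar>(a - (1-a)*q) * ((-q)^k - (-q)^n)\<bar> \<le> 1 * \<bar>(-q)^k - (-q)^n\<bar>"
      unfolding abs_mult using bb by (intro mult_right_mono) auto
    also have "\<dots> \<le> q^k + q^5"
    proof -
      have "-(q^5) \<le> (-q)^n" "(-q)^n \<le> q^5"
        using un abs_ge_self[of "(-q)^n"] abs_ge_minus_self[of "(-q)^n"] by linarith+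
      moreover have "0 \<le> q^k" using q1 by simp
      ultimately show ?thesis unfolding uk mult_1 abs_le_iff by linarith
    qed
    finally show ?thesis .
  qed
  have Nk: "NN a q k \<ge> 2*q^2 - 2*q^7 - q^k - q^5"
    using NN_diff[of a q k n] Nn' dif by linarith
  have qk2: "q^k \<le> q^2" using pow_le[of q 2 k] q1 k by simp
  show "NN a q k > 0" using Nk qk2 q5 q2p by linarith
  show "k = 2 \<or> (4 \<le> k \<and> NN a q k > q^2 * (1+q))"
  proof (cases "k = 2")
    case False
    then have k4: "4 \<le> k" using k by presburger
    have "q^k \<le> q^4" using pow_le[of q 4 k] q1 k4 by simp
    then have "NN a q k > q^2 + q^3" using Nk q5 q2p by linarith
    then show ?thesis using k4 by (simp add: algebra_simps power2_eq_square power3_eq_cube)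
  qed simp
  have "q^n < q^k" using q k by (intro power_strict_decreasing) auto
  then show "(-q)^n < (-q)^k" using uk abs_negpow[of q n] q by (smt (verit) abs_ge_self)
qed

lemma odd_bounds:
  fixes a q :: real and n k :: nat
  assumes a: "0 \<le> a" "a < 1" and q: "0 < q" "q < 1/2" and k: "odd k" "2 \<le> k" "k + 3 \<le> n"
    and D: "(1+q)^2 - real n*q > 0"
    and root: "NN a q k = 2*q^2*(1 - (-q)^k) / ((1+q)*((1+q)^2 - real n*q))"
  shows "NN a q k > 0" "NN a q n > 0" "n = 2 \<or> (4 \<le> n \<and> NN a q n > q^2 * (1+q))" "(-q)^k < (-q)^n"
proof -
  have k3: "3 \<le> k" using k by presburger
  have n5: "5 \<le> real n" using k by simp
  have n6: "6 \<le> real n" using k3 k by simp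
  have q1: "q < 1" "0 \<le> q" "q \<le> 1" using q by auto
  have q3: "q < 3/10"
  proof (rule ccontr)
    assume "\<not> q < 3/10"
    then have "q \<ge> 3/10" by simp
    moreover have "q^2 \<le> q/2" using q by (simp add: power2_eq_square mult_left_le_one_le)
    moreover have "real n * q \<ge> 6 * q" using n6 q by (intro mult_right_mono) auto
    moreover have "(1+q)^2 = 1 + 2*q + q^2" by (simp add: power2_eq_square algebra_simps)
    ultimately have "(1+q)^2 - real n*q \<le> 0" by linarith
    then show False using D by simp
  qed
  have q2p: "0 < q^2" using q by simp
  have e: "q^3 = q^2 * q" "q^6 = q^2 * q^4" by (simp_all add: eval_nat_numeral algebra_simps)
  have q3b: "q^3 \<le> q^2 * (3/10)" unfolding e(1) using q3 q2p by (intro mult_left_mono) auto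
  have q4: "q^4 \<le> 1/100"
  proof -
    have "q^4 \<le> (3/10)^4" using q q3 by (intro power_mono) auto
    moreover have "(3/10::real)^4 = 81/10000" by (simp add: eval_nat_numeral)
    ultimately show ?thesis by linarith
  qed
  have q6b: "q^6 \<le> q^2 * (1/100)" unfolding e(2) using q4 q2p by (intro mult_left_mono) auto
  have uk: "(-q)^k = - (q^k)" using k by (simp add: power_minus_odd)
  have qk: "0 \<le> q^k" "q^k \<le> q^3" using pow_le[of q 3 k] q1 k3 by auto
  have u1: "1 \<le> 1 - (-q)^k" unfolding uk using qk by simp
  have Nk: "NN a q k \<ge> 2*q^2*(1 - (-q)^k)"
    unfolding root using root_lower[OF q n5 D] u1 by simp
  have Nk': "NN a q k \<ge> 2*q^2"
  proof -
    have "2*q^2*(1 - (-q)^k) \<ge> 2*q^2*1" using u1 q2p by (intro mult_left_mono) auto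
    then show ?thesis using Nk by simp
  qed
  show "NN a q k > 0" using Nk' q2p by linarith
  have un: "\<bar>(-q)^n\<bar> \<le> q^6" using abs_negpow[of q n] pow_le[of q 6 n] q1 k3 k by simp
  have un': "-(q^6) \<le> (-q)^n" "(-q)^n \<le> q^6"
    using un abs_ge_self[of "(-q)^n"] abs_ge_minus_self[of "(-q)^n"] by linarith+
  have bb: "\<bar>a - (1-a)*q\<bar> \<le> 1" using b_bound a q1 q by simp
  have dif: "\<bar>(a - (1-a)*q) * ((-q)^n - (-q)^k)\<bar> \<le> q^6 + q^3"
  proof -
    have "\<bar>(a - (1-a)*q) * ((-q)^n - (-q)^k)\<bar> \<le> 1 * \<bar>(-q)^n - (-q)^k\<bar>"
      unfolding abs_mult using bb by (intro mult_right_mono) auto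
    also have "\<dots> \<le> q^6 + q^3" unfolding uk mult_1 abs_le_iff using un' qk by linarith
    finally show ?thesis .
  qed
  have Nn: "NN a q n \<ge> 2*q^2 - q^6 - q^3"
    using NN_diff[of a q n k] Nk' dif by linarith
  have "NN a q n > q^2 + q^3" using Nn q3b q6b q2p by linarith
  then have "NN a q n > q^2 * (1+q)" by (simp add: algebra_simps power2_eq_square power3_eq_cube)
  moreover have "4 \<le> n" using k3 k by simp
  ultimately show "n = 2 \<or> (4 \<le> n \<and> NN a q n > q^2 * (1+q))" by simp
  show "NN a q n > 0" using Nn q3b q6b q2p by linarith
  have "q^n < q^k" using q k by (intro power_strict_decreasing) auto
  then show "(-q)^k < (-q)^n" using uk un' abs_negpow[of q n] q abs_ge_minus_self[of "(-q)^n"] by linarith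
qed

lemma lambda1_ge:
  assumes "(M::real mat) \<in> carrier_mat n n" "eigenvalue M l"
  shows "l \<le> lambda1 M"
  unfolding lambda1_def using finite_eig[OF assms(1)] assms(2) by (intro Max_ge) auto

lemma lambda1_lt:
  assumes "(M::real mat) \<in> carrier_mat n n" "eigenvalue M l0" "\<And>mu. eigenvalue M mu \<Longrightarrow> mu < c"
  shows "lambda1 M < c"
proof -
  have "lambda1 M \<in> {x. eigenvalue M x}" unfolding lambda1_def
    using finite_eig[OF assms(1)] assms(2) by (intro Max_in) auto
  then show ?thesis using assms(3) by simp
qed

lemma mult_vec_sum:
  assumes "(M::real mat) \<in> carrier_mat n n" "i < n"
  shows "(M *\<^sub>v vec n z) $ i = (\<Sum>j<n. M$$(i,j) * z j)"
  using assms by (auto simp: scalar_prod_def row_def lessThan_atLeast0 intro!: sum.cong)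

lemma eig_from_vertex:
  assumes q: "q > 0" and irr: "\<And>i. \<not> H i i" and cards: "\<And>i. i < n \<Longrightarrow> card {j. j < n \<and> H i j} < n"
    and ve: "\<And>i. i < n \<Longrightarrow> (rho a q + a * real (card {j. j < n \<and> H i j})) * zz a q p i + (1-a) * (\<Sum>j\<in>{j. j < n \<and> H i j}. zz a q p j) = rho a q + 2"
    and S: "(\<Sum>j<n. zz a q p j) = (1+q)^2/q" and nz: "i0 < n" "zz a q p i0 \<noteq> 0"
  shows "eigenvalue (A_alpha a n (complement_graph H)) (lam a n q)"
proof -
  define M where "M = A_alpha a n (complement_graph H)"
  define v where "v = vec n (zz a q p)"
  have M: "M \<in> carrier_mat n n" unfolding M_def by (rule A_alpha_carrier)
  have "M *\<^sub>v v = lam a n q \<cdot>\<^sub>v v"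
  proof (rule eq_vecI)
    show "dim_vec (M *\<^sub>v v) = dim_vec (lam a n q \<cdot>\<^sub>v v)" using M unfolding v_def by simp
    fix i assume "i < dim_vec (lam a n q \<cdot>\<^sub>v v)"
    then have i: "i < n" unfolding v_def by simp
    have "(M *\<^sub>v v) $ i = (\<Sum>j<n. M$$(i,j) * zz a q p j)" unfolding v_def by (rule mult_vec_sum[OF M i])
    also have "\<dots> = lam a n q * zz a q p i + (1-a) * ((\<Sum>j<n. zz a q p j) - (1+q)^2/q)"
      unfolding M_def using Mz_identity[where H=H and a=a and q=q and z="zz a q p" and n=n and i=i, OF i irr[of i] _ cards[OF i] ve[OF i]] q by simp
    also have "\<dots> = (lam a n q \<cdot>\<^sub>v v) $ i" unfolding S v_def using i by simp
    finally show "(M *\<^sub>v v) $ i = (lam a n q \<cdot>\<^sub>v v) $ i" .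
  qed
  moreover have "v \<noteq> 0\<^sub>v n"
  proof
    assume "v = 0\<^sub>v n"
    then have "v $ i0 = 0" using nz by simp
    then show False using nz unfolding v_def by simp
  qed
  moreover have "v \<in> carrier_vec n" unfolding v_def by simp
  ultimately show ?thesis unfolding M_def[symmetric] eigenvalue_def eigenvector_def using M by auto
qed

lemma eig_upper:
  assumes a: "0 \<le> a" "a < 1" and q: "q > 0" and irr: "\<And>i. \<not> H i i" and sym: "\<And>i j. H i j = H j i"
    and cards: "\<And>i. i < n \<Longrightarrow> card {j. j < n \<and> H i j} < n"
    and ve: "\<And>i. i < n \<Longrightarrow> (rho a q + a * real (card {j. j < n \<and> H i j})) * zz a q p i + (1-a) * (\<Sum>j\<in>{j. j < n \<and> H i j}. zz a q p j) = rho a q + 2"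
    and S: "(\<Sum>j<n. zz a q p j) < (1+q)^2/q" and pos: "\<And>i. zz a q p i > 0"
    and ev: "eigenvalue (A_alpha a n (complement_graph H)) mu"
  shows "mu < lam a n q"
proof (rule eig_bound[OF A_alpha_carrier _ _ _ _ ev])
  fix i j assume ij: "i < n" "j < n"
  show "0 \<le> A_alpha a n (complement_graph H) $$ (i, j)" unfolding A_alpha_entry[OF ij] using a by simp
  show "A_alpha a n (complement_graph H) $$ (i, j) = A_alpha a n (complement_graph H) $$ (j, i)"
    unfolding A_alpha_entry[OF ij] A_alpha_entry[OF ij(2,1)] complement_graph_def using sym by auto
next
  fix i assume i: "i < n"
  show "0 < zz a q p i" by (rule pos)
  have "(\<Sum>j<n. A_alpha a n (complement_graph H) $$ (i, j) * zz a q p j) = lam a n q * zz a q p i + (1-a) * ((\<Sum>j<n. zz a q p j) - (1+q)^2/q)"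
    using Mz_identity[where H=H and a=a and q=q and z="zz a q p" and n=n and i=i, OF i irr[of i] _ cards[OF i] ve[OF i]] q by simp
  also have "\<dots> < lam a n q * zz a q p i" using S a by (simp add: mult_pos_neg)
  finally show "(\<Sum>j<n. A_alpha a n (complement_graph H) $$ (i, j) * zz a q p j) < lam a n q * zz a q p i" .
qed

lemma frac_id:
  fixes q U D' :: real
  assumes "0 < q" "0 < U" "0 < D'"
  shows "q / (2*q^2*U / ((1+q)*D')) * (2 * U / (1 + q)) = D' / q"
proof -
  have nz: "q \<noteq> 0" "U \<noteq> 0" "1 + q \<noteq> 0" "D' \<noteq> 0" using assms by auto
  have "q / (2*q^2*U / ((1+q)*D')) * (2 * U / (1 + q)) = (q * ((1+q)*D') * (2*U)) / ((2*q^2*U) * (1+q))"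
    by (simp add: divide_divide_eq_right times_divide_times_eq)
  also have "(q * ((1+q)*D') * (2*U)) = (D') * ((2*q^2*U) * (1+q)) / q"
    using nz by (simp add: power2_eq_square field_simps)
  also have "D' * ((2*q^2*U) * (1+q)) / q / ((2*q^2*U) * (1+q)) = D' / q"
    using nz by simp
  finally show ?thesis .
qed

lemma root_props:
  fixes a q :: real and n p :: nat
  assumes q: "0 < q" "q < 1/2" and D: "(1+q)^2 - real n*q > 0"
    and root: "NN a q p = 2*q^2*(1 - (-q)^p) / ((1+q)*((1+q)^2 - real n*q))"
    and p: "1 \<le> p" "p \<le> n"
  shows "NN a q p > 0" "(\<Sum>j<n. zz a q p j) = (1+q)^2/q"
proof -
  have "\<bar>(-q)^p\<bar> = q^p" using abs_negpow[of q p] q by simp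
  also have "q^p < 1" using q p by (simp add: power_less_one_iff)
  finally have u: "0 < 1 - (-q)^p" using abs_ge_self[of "(-q)^p"] by linarith
  show Np: "NN a q p > 0" unfolding root using u q D by (intro divide_pos_pos mult_pos_pos) auto
  define D' where "D' = (1+q)^2 - real n*q"
  have "(\<Sum>j<n. zz a q p j) = real n + q / NN a q p * (2 * (1 - (-q)^p) / (1 + q))"
    using sum_zz[OF p(2)] q by simp
  also have "q / NN a q p * (2 * (1 - (-q)^p) / (1 + q)) = D' / q"
    unfolding root D'_def[symmetric] using frac_id[OF q(1) u, of D'] D unfolding D'_def by simp
  also have "real n + D' / q = (1+q)^2/q" unfolding D'_def using q by (simp add: field_simps)
  finally show "(\<Sum>j<n. zz a q p j) = (1+q)^2/q" .
qed

lemma sym_P: "path_graph i j = path_graph j i" by (auto simp: path_graph_def)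
lemma irr_P: "\<not> path_graph i i" by (simp add: path_graph_def)
lemma sym_U: "path_cycle_union k n i j = path_cycle_union k n j i"
  by (auto simp: path_cycle_union_def path_graph_def cycle_graph_def)
lemma irr_U: "\<not> path_cycle_union k n i i"
  by (simp add: path_cycle_union_def path_graph_def cycle_graph_def)

theorem lemma2p4:
  fixes \<alpha> :: real and n k :: nat
  assumes "0 \<le> \<alpha>" "\<alpha> < 1" "2 \<le> k" "k + 3 \<le> n"
  shows "(even k \<longrightarrow>
            lambda1 (A_alpha \<alpha> n (complement_graph path_graph))
            > lambda1 (A_alpha \<alpha> n (complement_graph (path_cycle_union k n))))
       \<and> (odd k \<longrightarrow>
            lambda1 (A_alpha \<alpha> n (complement_graph path_graph))
            < lambda1 (A_alpha \<alpha> n (complement_graph (path_cycle_union k n))))"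
proof -
  note a = assms(1,2)
  define M1 where "M1 = A_alpha \<alpha> n (complement_graph path_graph)"
  define M2 where "M2 = A_alpha \<alpha> n (complement_graph (path_cycle_union k n))"
  have M1c: "M1 \<in> carrier_mat n n" and M2c: "M2 \<in> carrier_mat n n"
    unfolding M1_def M2_def by (rule A_alpha_carrier)+
  have n5: "5 \<le> real n" using assms by simp
  have n2: "2 \<le> n" "1 \<le> n" using assms by auto
  obtain q1 where q1: "0 < q1" "q1 < 1/2" "(1+q1)^2 - real n*q1 > 0"
    "NN \<alpha> q1 n = 2*q1^2*(1 - (-q1)^n) / ((1+q1)*((1+q1)^2 - real n*q1))"
    using root_exists[OF a n2(2) n5] by blast
  obtain q2 where q2: "0 < q2" "q2 < 1/2" "(1+q2)^2 - real n*q2 > 0"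
    "NN \<alpha> q2 k = 2*q2^2*(1 - (-q2)^k) / ((1+q2)*((1+q2)^2 - real n*q2))"
    using root_exists[OF a _ n5, of k] assms by auto
  have kn: "1 \<le> k" "k \<le> n" using assms by auto
  note rp1 = root_props[OF q1(1,2,3,4) n2(2) order.refl]
  note rp2 = root_props[OF q2(1,2,3,4) kn]
  have veP: "\<And>i. i < n \<Longrightarrow> (rho \<alpha> q + \<alpha> * real (card {j. j<n \<and> path_graph i j})) * zz \<alpha> q n i
       + (1-\<alpha>) * (\<Sum>j\<in>{j. j<n \<and> path_graph i j}. zz \<alpha> q n j) = rho \<alpha> q + 2"
    if "NN \<alpha> q n > 0" "q > 0" for q using vertex_P[OF _ n2(1)] that by simp
  have veU: "\<And>i. i < n \<Longrightarrow> (rho \<alpha> q + \<alpha> * real (card {j. j<n \<and> path_cycle_union k n i j})) * zz \<alpha> q k i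
       + (1-\<alpha>) * (\<Sum>j\<in>{j. j<n \<and> path_cycle_union k n i j}. zz \<alpha> q k j) = rho \<alpha> q + 2"
    if "NN \<alpha> q k > 0" "q > 0" for q using vertex_U[OF _ assms(3,4)] that by simp
  have E1: "eigenvalue M1 (lam \<alpha> n q1)"
  proof -
    have "\<exists>i0<n. zz \<alpha> q1 n i0 \<noteq> 0"
    proof (rule ccontr)
      assume "\<not> ?thesis"
      then have "(\<Sum>j<n. zz \<alpha> q1 n j) = 0" by simp
      then show False using rp1(2) q1(1) by simp
    qed
    then obtain i0 where "i0 < n" "zz \<alpha> q1 n i0 \<noteq> 0" by blast
    then show ?thesis unfolding M1_def
      by (intro eig_from_vertex[OF q1(1) irr_P card_P veP[OF rp1(1) q1(1)] rp1(2)])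
  qed
  have E2: "eigenvalue M2 (lam \<alpha> n q2)"
  proof -
    have "zz \<alpha> q2 k (n-1) \<noteq> 0" "n - 1 < n" unfolding zz_def using assms by auto
    then show ?thesis unfolding M2_def
      by (intro eig_from_vertex[OF q2(1) irr_U card_U veU[OF rp2(1) q2(1)] rp2(2)])
  qed
  have L1: "lam \<alpha> n q1 \<le> lambda1 M1" by (rule lambda1_ge[OF M1c E1])
  have L2: "lam \<alpha> n q2 \<le> lambda1 M2" by (rule lambda1_ge[OF M2c E2])
  show ?thesis unfolding M1_def[symmetric] M2_def[symmetric]
  proof (intro conjI impI)
    assume ev: "even k"
    note eb = even_bounds[OF a q1(1,2) ev assms(3,4) q1(3,4)]
    have S: "(\<Sum>j<n. zz \<alpha> q1 k j) < (1+q1)^2/q1"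
    proof -
      have "(\<Sum>j<n. zz \<alpha> q1 k j) = real n + q1 / NN \<alpha> q1 k * (2 * (1 - (-q1)^k) / (1 + q1))"
        using sum_zz[OF kn(2)] q1 by simp
      also have "\<dots> < real n + q1 / NN \<alpha> q1 n * (2 * (1 - (-q1)^n) / (1 + q1))"
        using sum_compare[of q1 \<alpha> n k] q1 eb by simp
      also have "\<dots> = (1+q1)^2/q1" using sum_zz[of n n q1 \<alpha>] rp1(2) q1 by simp
      finally show ?thesis .
    qed
    have pos: "zz \<alpha> q1 k i > 0" for i using zz_pos[of q1 \<alpha> k i] q1 eb by simp
    have "\<And>mu. eigenvalue M2 mu \<Longrightarrow> mu < lam \<alpha> n q1"
      unfolding M2_def by (rule eig_upper[OF a q1(1) irr_U sym_U card_U veU[OF eb(2) q1(1)] S pos])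
    then have "lambda1 M2 < lam \<alpha> n q1" by (rule lambda1_lt[OF M2c E2])
    then show "lambda1 M2 < lambda1 M1" using L1 by simp
  next
    assume od: "odd k"
    note ob = odd_bounds[OF a q2(1,2) od assms(3,4) q2(3,4)]
    have S: "(\<Sum>j<n. zz \<alpha> q2 n j) < (1+q2)^2/q2"
    proof -
      have "(\<Sum>j<n. zz \<alpha> q2 n j) = real n + q2 / NN \<alpha> q2 n * (2 * (1 - (-q2)^n) / (1 + q2))"
        using sum_zz[of n n q2 \<alpha>] q2 by simp
      also have "\<dots> < real n + q2 / NN \<alpha> q2 k * (2 * (1 - (-q2)^k) / (1 + q2))"
        using sum_compare[of q2 \<alpha> k n] q2 ob by simp
      also have "\<dots> = (1+q2)^2/q2" using sum_zz[OF kn(2), of q2 \<alpha>] rp2(2) q2 by simp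
      finally show ?thesis .
    qed
    have pos: "zz \<alpha> q2 n i > 0" for i using zz_pos[of q2 \<alpha> n i] q2 ob by simp
    have "\<And>mu. eigenvalue M1 mu \<Longrightarrow> mu < lam \<alpha> n q2"
      unfolding M1_def by (rule eig_upper[OF a q2(1) irr_P sym_P card_P veP[OF ob(2) q2(1)] S pos])
    then have "lambda1 M1 < lam \<alpha> n q2" by (rule lambda1_lt[OF M1c E1])
    then show "lambda1 M1 < lambda1 M2" using L2 by simp
  qed
qed

end
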